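(* In the blocking model with S-phase $S=[s,t]$ of length $|S|=t-s$, no more than $\lceil |S|^{-1}\rceil$ critical clusters can persist.
   Context: Cell cycle model: each of finitely many cells has a position $x_i\in[0,1)$ on the normalized cell cycle, viewed as a circle (reaching $1$ means division and restart at $0$; the population is fixed). There is a responsive interval $R=[r,s]$ preceding the S-phase $S=[s,t]$, $0\le r<s<t\le1$. Blocking model with threshold $\tau>0$: all cells move with $dx_i/dt=1$, except that whenever the number of cells in $S$ is at least $\tau$, cells arriving at $s$ are stopped there (blocked from entering $S$) until the number of cells in $S$ drops below $\tau$, at which moment all cells accumulated at $s$ enter $S$ together. A cluster is a group of cells occupying the same position (synchronized); it is critical if it contains at least $\tau$ cells. A critical cluster persists if it continues to exist for all future time along the trajectory. *)

theory Defs
  imports "HOL-Analysis.Analysis"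
begin

text \<open>A trajectory is given by a
continuous lift y :: real => 'c => real; the position of cell i on the
normalized cell cycle (the circle [0,1)) at time tm is frac (y tm i).\<close>

definition pos :: "(real \<Rightarrow> 'c \<Rightarrow> real) \<Rightarrow> real \<Rightarrow> 'c \<Rightarrow> real" where
  "pos y tm i = frac (y tm i)"

text \<open>Number of cells currently inside the S-phase (cells held at the entry
point s are blocked from entering and not counted; cells reaching t leave).\<close>

definition num_in_S :: "real \<Rightarrow> real \<Rightarrow> (real \<Rightarrow> 'c::finite \<Rightarrow> real) \<Rightarrow> real \<Rightarrow> nat" where
  "num_in_S s t y tm = card {j. s < pos y tm j \<and> pos y tm j < t}"

definition blocking_trajectory ::
  "real \<Rightarrow> real \<Rightarrow> real \<Rightarrow> (real \<Rightarrow> 'c::finite \<Rightarrow> real) \<Rightarrow> bool" where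
  "blocking_trajectory s t thr y \<longleftrightarrow>
     (\<forall>i. continuous_on {0..} (\<lambda>tm. y tm i)) \<and>
     (\<forall>tm\<ge>0. \<forall>i. \<exists>\<epsilon>>0.
        (if pos y tm i = s \<and> real (num_in_S s t y tm) \<ge> thr
         then (\<forall>h\<in>{0..<\<epsilon>}. y (tm + h) i = y tm i)
         else (\<forall>h\<in>{0..<\<epsilon>}. y (tm + h) i = y tm i + h)))"

definition is_cluster :: "(real \<Rightarrow> 'c \<Rightarrow> real) \<Rightarrow> real \<Rightarrow> 'c set \<Rightarrow> bool" where
  "is_cluster y tm C \<longleftrightarrow> (\<exists>i. C = {j. pos y tm j = pos y tm i})"

definition critical_cluster :: "real \<Rightarrow> (real \<Rightarrow> 'c::finite \<Rightarrow> real) \<Rightarrow> real \<Rightarrow> 'c set \<Rightarrow> bool" where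
  "critical_cluster thr y tm C \<longleftrightarrow> is_cluster y tm C \<and> real (card C) \<ge> thr"

definition persists :: "(real \<Rightarrow> 'c \<Rightarrow> real) \<Rightarrow> real \<Rightarrow> 'c set \<Rightarrow> bool" where
  "persists y tm0 C \<longleftrightarrow> (\<forall>tm\<ge>tm0. is_cluster y tm C)"

end

theory Submission
  imports Defs
begin

lemma real_induct_right:
  fixes a b :: real and P :: "real \<Rightarrow> bool"
  assumes ab: "a \<le> b" and Pa: "P a"
    and step: "\<And>x. a \<le> x \<Longrightarrow> x < b \<Longrightarrow> P x \<Longrightarrow> \<exists>e>0. \<forall>h\<in>{0..<e}. x + h \<le> b \<longrightarrow> P (x + h)"
    and lim: "\<And>x. a < x \<Longrightarrow> x \<le> b \<Longrightarrow> (\<forall>u\<in>{a..<x}. P u) \<Longrightarrow> P x"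
  shows "\<forall>x\<in>{a..b}. P x"
proof -
  define S where "S = {x\<in>{a..b}. \<forall>u\<in>{a..x}. P u}"
  define T where "T = Sup S"
  have aS: "a \<in> S" using ab Pa by (auto simp: S_def)
  have bdd: "bdd_above S" unfolding S_def by (rule bdd_aboveI[of _ b]) auto
  have aT: "a \<le> T" unfolding T_def using aS bdd by (rule cSup_upper)
  have Tb: "T \<le> b" unfolding T_def using aS by (intro cSup_least) (auto simp: S_def)
  have below: "\<forall>u\<in>{a..<T}. P u"
  proof
    fix u assume u: "u \<in> {a..<T}"
    then have "u < Sup S" by (simp add: T_def)
    then obtain x where "x \<in> S" "u < x" using aS less_cSup_iff[OF _ bdd] by blast
    then show "P u" using u by (auto simp: S_def)
  qed
  have PT: "P T"
  proof (cases "T = a")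
    case True then show ?thesis using Pa by simp
  next
    case False then show ?thesis using lim[of T] aT Tb below by auto
  qed
  have TS: "T \<in> S" using below PT aT Tb by (auto simp: S_def)
  have "T = b"
  proof (rule ccontr)
    assume "T \<noteq> b"
    then have Tlb: "T < b" using Tb by simp
    obtain e where e: "e > 0" "\<forall>h\<in>{0..<e}. T + h \<le> b \<longrightarrow> P (T + h)"
      using step[OF aT Tlb PT] by blast
    define x where "x = min (T + e/2) b"
    have "x \<in> S"
    proof -
      have "\<forall>u\<in>{a..x}. P u"
      proof
        fix u assume u: "u \<in> {a..x}"
        show "P u"
        proof (cases "u \<le> T")
          case True then show ?thesis using TS u by (auto simp: S_def)
        next
          case False
          then have "u - T \<in> {0..<e}" "T + (u - T) \<le> b" using u e by (auto simp: x_def)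
          then show ?thesis using e(2) by fastforce
        qed
      qed
      then show ?thesis using aT Tlb e by (auto simp: S_def x_def)
    qed
    then have "x \<le> T" unfolding T_def using bdd by (rule cSup_upper)
    then show False using Tlb e by (auto simp: x_def)
  qed
  then show ?thesis using TS by (auto simp: S_def)
qed

lemma left_closed:
  fixes f :: "real \<Rightarrow> real"
  assumes cont: "continuous_on {0..} f" and a: "0 \<le> a" "a < x"
    and ge: "\<forall>u\<in>{a..<x}. f u \<ge> c"
  shows "f x \<ge> c"
proof (rule ccontr)
  assume "\<not> c \<le> f x"
  then have e: "c - f x > 0" by simp
  have "x \<in> {0..}" using a by simp
  then obtain d where d: "d > 0" "\<forall>x'\<in>{0..}. dist x' x < d \<longrightarrow> dist (f x') (f x) < c - f x"
    using cont e unfolding continuous_on_iff by blast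
  define u where "u = max a (x - d/2)"
  have "u \<in> {a..<x}" using a d by (auto simp: u_def)
  moreover have "dist u x < d" using a d by (auto simp: u_def dist_real_def)
  ultimately have "dist (f u) (f x) < c - f x" "f u \<ge> c" using d a ge by (auto simp: u_def)
  then show False by (auto simp: dist_real_def)
qed

locale blk =
  fixes s t thr :: real and y :: "real \<Rightarrow> 'c::finite \<Rightarrow> real"
  assumes bt: "blocking_trajectory s t thr y"
begin

definition held :: "real \<Rightarrow> 'c \<Rightarrow> bool" where
  "held tm i \<longleftrightarrow> pos y tm i = s \<and> thr \<le> real (num_in_S s t y tm)"

lemma cont: "continuous_on {0..} (\<lambda>tm. y tm i)"
  using bt unfolding blocking_trajectory_def by blast

lemma loc:
  assumes "0 \<le> tm"
  shows "\<exists>e>0. (held tm i \<longrightarrow> (\<forall>h\<in>{0..<e}. y (tm + h) i = y tm i)) \<and>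
                (\<not> held tm i \<longrightarrow> (\<forall>h\<in>{0..<e}. y (tm + h) i = y tm i + h))"
proof -
  obtain e where "e > 0" and "(if pos y tm i = s \<and> real (num_in_S s t y tm) \<ge> thr
         then (\<forall>h\<in>{0..<e}. y (tm + h) i = y tm i)
         else (\<forall>h\<in>{0..<e}. y (tm + h) i = y tm i + h))"
    using bt assms unfolding blocking_trajectory_def by blast
  then show ?thesis unfolding held_def by (intro exI[of _ e]) (auto split: if_splits)
qed

lemma mono:
  assumes "0 \<le> a" "a \<le> b"
  shows "y a i \<le> y b i"
proof -
  have "\<forall>x\<in>{a..b}. y a i \<le> y x i"
  proof (rule real_induct_right)
    fix x assume x: "a \<le> x" "x < b" "y a i \<le> y x i"
    obtain e where e: "e > 0" "(held x i \<longrightarrow> (\<forall>h\<in>{0..<e}. y (x + h) i = y x i)) \<and>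
                (\<not> held x i \<longrightarrow> (\<forall>h\<in>{0..<e}. y (x + h) i = y x i + h))"
      using loc[of x i] x assms by auto
    show "\<exists>e>0. \<forall>h\<in>{0..<e}. x + h \<le> b \<longrightarrow> y a i \<le> y (x + h) i"
      using e x by (intro exI[of _ e]) (cases "held x i"; auto)
  next
    fix x assume "a < x" "x \<le> b" "\<forall>u\<in>{a..<x}. y a i \<le> y u i"
    then show "y a i \<le> y x i" using left_closed[OF cont, of a x "y a i"] assms by auto
  qed (use assms in auto)
  then show ?thesis using assms by auto
qed

lemma free:
  assumes a: "0 \<le> a" "0 \<le> L"
    and nh: "\<forall>tm\<in>{a..<a+L}. y tm i = y a i + (tm - a) \<longrightarrow> \<not> held tm i"
  shows "\<forall>h\<in>{0..L}. y (a + h) i = y a i + h"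
proof -
  have "\<forall>x\<in>{a..a+L}. y x i = y a i + (x - a)"
  proof (rule real_induct_right)
    fix x assume x: "a \<le> x" "x < a + L" "y x i = y a i + (x - a)"
    then have "\<not> held x i" using nh by auto
    moreover obtain e where e: "e > 0" "(\<not> held x i \<longrightarrow> (\<forall>h\<in>{0..<e}. y (x + h) i = y x i + h))"
      using loc[of x i] x a by auto
    ultimately show "\<exists>e>0. \<forall>h\<in>{0..<e}. x + h \<le> a + L \<longrightarrow> y (x + h) i = y a i + (x + h - a)"
      using x(3) by (intro exI[of _ e]) (simp add: e(1))
  next
    fix x assume x: "a < x" "x \<le> a + L" "\<forall>u\<in>{a..<x}. y u i = y a i + (u - a)"
    have c: "continuous_on {0..} (\<lambda>u. y u i - (y a i + (u - a)))"
      by (rule continuous_on_diff[OF cont continuous_on_add[OF continuous_on_const continuous_on_diff[OF continuous_on_id continuous_on_const]]])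
    have c2: "continuous_on {0..} (\<lambda>u. - (y u i - (y a i + (u - a))))"
      by (rule continuous_on_minus[OF c])
    have x3: "\<forall>u\<in>{a..<x}. 0 \<le> y u i - (y a i + (u - a)) \<and> 0 \<le> - (y u i - (y a i + (u - a)))"
    proof
      fix u assume "u \<in> {a..<x}"
      then have "y u i = y a i + (u - a)" using x(3) by blast
      then show "0 \<le> y u i - (y a i + (u - a)) \<and> 0 \<le> - (y u i - (y a i + (u - a)))" by simp
    qed
    have "y x i - (y a i + (x - a)) \<ge> 0" using left_closed[OF c, of a x 0] x(1) a x3 by blast
    moreover have "- (y x i - (y a i + (x - a))) \<ge> 0" using left_closed[OF c2, of a x 0] x(1) a x3 by blast
    ultimately show "y x i = y a i + (x - a)" by linarith
  qed (use a in simp_all)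
  then show ?thesis by (metis add.commute add_diff_cancel_left' atLeastAtMost_iff add_le_cancel_left le_add_same_cancel1)
qed

lemma stuck:
  assumes a: "0 \<le> a" "0 \<le> L"
    and hh: "\<forall>tm\<in>{a..<a+L}. y tm i = y a i \<longrightarrow> held tm i"
  shows "\<forall>tm\<in>{a..a+L}. y tm i = y a i"
proof (rule real_induct_right)
  fix x assume x: "a \<le> x" "x < a + L" "y x i = y a i"
  then have "held x i" using hh by auto
  moreover obtain e where e: "e > 0" "(held x i \<longrightarrow> (\<forall>h\<in>{0..<e}. y (x + h) i = y x i))"
    using loc[of x i] x a by auto
  ultimately show "\<exists>e>0. \<forall>h\<in>{0..<e}. x + h \<le> a + L \<longrightarrow> y (x + h) i = y a i"
    using x by (intro exI[of _ e]) auto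
next
  fix x assume x: "a < x" "x \<le> a + L" "\<forall>u\<in>{a..<x}. y u i = y a i"
  have c: "continuous_on {0..} (\<lambda>u. y u i - y a i)"
    by (rule continuous_on_diff[OF cont continuous_on_const])
  have c2: "continuous_on {0..} (\<lambda>u. - (y u i - y a i))"
    by (rule continuous_on_minus[OF c])
  have x3: "\<forall>u\<in>{a..<x}. 0 \<le> y u i - y a i \<and> 0 \<le> - (y u i - y a i)"
  proof
    fix u assume "u \<in> {a..<x}"
    then have "y u i = y a i" using x(3) by blast
    then show "0 \<le> y u i - y a i \<and> 0 \<le> - (y u i - y a i)" by simp
  qed
  have "y x i - y a i \<ge> 0" using left_closed[OF c, of a x 0] x(1) a x3 by blast
  moreover have "- (y x i - y a i) \<ge> 0" using left_closed[OF c2, of a x 0] x(1) a x3 by blast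
  ultimately show "y x i = y a i" by linarith
qed (use a in auto)

lemma exit:
  assumes a: "0 \<le> a" "a \<le> b" and l: "y a i \<le> l" "l < y b i"
  shows "\<exists>\<sigma>\<in>{a..<b}. y \<sigma> i = l \<and> \<not> held \<sigma> i"
proof (rule ccontr)
  assume H: "\<not> ?thesis"
  have "\<forall>x\<in>{a..b}. y x i \<le> l"
  proof (rule real_induct_right)
    fix x assume x: "a \<le> x" "x < b" "y x i \<le> l"
    show "\<exists>e>0. \<forall>h\<in>{0..<e}. x + h \<le> b \<longrightarrow> y (x + h) i \<le> l"
    proof (cases "y x i = l")
      case True
      then have "held x i" using H x by auto
      moreover obtain e where e: "e > 0" "(held x i \<longrightarrow> (\<forall>h\<in>{0..<e}. y (x + h) i = y x i))"
        using loc[of x i] x a by auto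
      ultimately show ?thesis using True by (intro exI[of _ e]) auto
    next
      case False
      then have el: "l - y x i > 0" using x by simp
      have "x \<in> {0..}" using x a by simp
      then obtain d where d: "d > 0" "\<forall>x'\<in>{0..}. dist x' x < d \<longrightarrow> dist (y x' i) (y x i) < l - y x i"
        using cont[of i] el unfolding continuous_on_iff by blast
      show ?thesis
      proof (intro exI[of _ d] conjI ballI impI)
        fix h assume h: "h \<in> {0..<d}" "x + h \<le> b"
        then have "dist (y (x + h) i) (y x i) < l - y x i" using d x a by (auto simp: dist_real_def)
        then show "y (x + h) i \<le> l" by (auto simp: dist_real_def)
      qed (use d in auto)
    qed
  next
    fix x assume x: "a < x" "x \<le> b" "\<forall>u\<in>{a..<x}. y u i \<le> l"
    have c2: "continuous_on {0..} (\<lambda>u. - y u i)"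
      by (rule continuous_on_minus[OF cont])
    show "y x i \<le> l" using left_closed[OF c2, of a x "- l"] x a by auto
  qed (use a l in auto)
  then have "y b i \<le> l" using a by auto
  then show False using l by linarith
qed

end


lemma frac_s: "0 \<le> s \<Longrightarrow> s < 1 \<Longrightarrow> frac (s + of_int m) = (s::real)"
  by simp

lemma frac_ne:
  fixes x s :: real
  assumes "of_int k < x - s" "x - s < of_int k + 1"
  shows "frac x \<noteq> s"
proof
  assume "frac x = s"
  then have "x - s \<in> \<int>" by (simp add: frac_unique_iff)
  then obtain j where j: "x - s = of_int j" by (auto elim: Ints_cases)
  then have "k < j" "j < k + 1" using assms by linarith+
  then show False by simp
qed

lemma frac_eq_s_floor:
  fixes l s :: real
  assumes "frac l = s"
  shows "l = s + of_int (floor l)"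
  using assms by (simp add: frac_def)

lemma frac_shift:
  fixes l s h :: real
  assumes "frac l = s" "0 \<le> h" "s + h < 1"
  shows "frac (l + h) = s + h"
proof -
  have e: "l + h = (s + h) + of_int (floor l)" using frac_eq_s_floor[OF assms(1)] by simp
  have "0 \<le> s" using assms(1) by (metis frac_ge_0)
  have "frac (l + h) = frac (s + h)" unfolding e by (rule frac_add_of_int_right)
  also have "\<dots> = s + h" using \<open>0 \<le> s\<close> assms by (simp add: frac_eq)
  finally show ?thesis .
qed

lemma spread_aux:
  fixes lo D :: real
  shows "\<forall>F. card F = Suc n \<longrightarrow> finite F \<longrightarrow> (\<forall>x\<in>F. lo \<le> x) \<longrightarrow> (\<forall>x\<in>F. \<forall>y\<in>F. x < y \<longrightarrow> x + D \<le> y)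
    \<longrightarrow> lo + real n * D \<le> Max F"
proof (induction n)
  case 0
  show ?case
  proof (intro allI impI)
    fix F :: "real set" assume c1: "card F = Suc 0" and "finite F" and lo: "\<forall>x\<in>F. lo \<le> x"
    obtain x where x: "F = {x}" using card_1_singletonE[of F] c1 by auto
    have "lo \<le> x" using lo x by blast
    then show "lo + real 0 * D \<le> Max F" using x by simp
  qed
next
  case (Suc n)
  show ?case
  proof (intro allI impI)
    fix F :: "real set"
    assume c: "card F = Suc (Suc n)" and f: "finite F" and lo: "\<forall>x\<in>F. lo \<le> x"
      and g: "\<forall>x\<in>F. \<forall>y\<in>F. x < y \<longrightarrow> x + D \<le> y"
    have ne: "F \<noteq> {}" using c by auto
    define F' where "F' = F - {Max F}"
    have MF: "Max F \<in> F" using f ne by simp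
    have cF': "card F' = Suc n" using c MF f by (simp add: F'_def)
    have fF': "finite F'" using f by (simp add: F'_def)
    have neF': "F' \<noteq> {}" using cF' by auto
    have sub: "F' \<subseteq> F" by (auto simp: F'_def)
    have IH: "lo + real n * D \<le> Max F'"
    proof -
      have h1: "\<forall>x\<in>F'. lo \<le> x" using lo sub by blast
      have h2: "\<forall>x\<in>F'. \<forall>y\<in>F'. x < y \<longrightarrow> x + D \<le> y" using g sub by blast
      show ?thesis using Suc.IH h1 h2 cF' fF' by simp
    qed
    have M'in: "Max F' \<in> F'" using fF' neF' by simp
    have "Max F' \<le> Max F" using M'in sub f by (meson Max_ge subsetD)
    moreover have "Max F' \<noteq> Max F" using M'in by (auto simp: F'_def)
    ultimately have "Max F' < Max F" by simp
    then have "Max F' + D \<le> Max F" using g[rule_format, of "Max F'" "Max F"] M'in MF sub by blast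
    then show "lo + real (Suc n) * D \<le> Max F" using IH by (simp add: algebra_simps)
  qed
qed

lemma spread:
  fixes F :: "real set" and lo D :: real
  assumes "finite F" "F \<noteq> {}" "\<forall>x\<in>F. lo \<le> x" "\<forall>x\<in>F. \<forall>y\<in>F. x < y \<longrightarrow> x + D \<le> y"
  shows "lo + (real (card F) - 1) * D \<le> Max F"
proof -
  obtain n where n: "card F = Suc n" using assms(1,2) by (metis card_0_eq not0_implies_Suc)
  then show ?thesis using spread_aux[of n lo D] assms by auto
qed

locale blk2 = blk s t thr y for s t thr :: real and y :: "real \<Rightarrow> 'c::finite \<Rightarrow> real" +
  fixes tm0 :: real
  assumes s0: "0 < s" and st: "s < t" and t1: "t \<le> 1" and thr0: "thr > 0" and tm0: "0 \<le> tm0"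
begin

definition K where "K = {C. critical_cluster thr y tm0 C \<and> persists y tm0 C}"
definition rep :: "'c set \<Rightarrow> 'c" where "rep C = (SOME j. j \<in> C)"
abbreviation num where "num tm \<equiv> num_in_S s t y tm"

lemma memK:
  assumes "C \<in> K"
  shows "rep C \<in> C" "thr \<le> real (card C)" "\<And>tm. tm0 \<le> tm \<Longrightarrow> is_cluster y tm C"
proof -
  show ct: "thr \<le> real (card C)" using assms by (auto simp: K_def critical_cluster_def)
  then have "card C > 0" using thr0 by linarith
  then have "C \<noteq> {}" by auto
  then show "rep C \<in> C" unfolding rep_def by (simp add: some_in_eq)
  show "\<And>tm. tm0 \<le> tm \<Longrightarrow> is_cluster y tm C" using assms by (auto simp: K_def persists_def)
qed

lemma same_pos:
  assumes "C \<in> K" "tm0 \<le> tm" "j \<in> C"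
  shows "pos y tm j = pos y tm (rep C)"
proof -
  obtain i where "C = {j. pos y tm j = pos y tm i}" using memK(3)[OF assms(1,2)] by (auto simp: is_cluster_def)
  then show ?thesis using memK(1)[OF assms(1)] assms(3) by auto
qed

lemma distinct_pos:
  assumes "C \<in> K" "C' \<in> K" "tm0 \<le> tm" "pos y tm (rep C) = pos y tm (rep C')"
  shows "C = C'"
proof -
  obtain i where i: "C = {j. pos y tm j = pos y tm i}" using memK(3)[OF assms(1,3)] by (auto simp: is_cluster_def)
  obtain i' where i': "C' = {j. pos y tm j = pos y tm i'}" using memK(3)[OF assms(2,3)] by (auto simp: is_cluster_def)
  have "pos y tm (rep C) = pos y tm i" using memK(1)[OF assms(1)] i by auto
  moreover have "pos y tm (rep C') = pos y tm i'" using memK(1)[OF assms(2)] i' by auto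
  ultimately show ?thesis using i i' assms(4) by auto
qed

lemma inS:
  assumes "C \<in> K" "tm0 \<le> tm" "s < pos y tm (rep C)" "pos y tm (rep C) < t"
  shows "thr \<le> real (num tm)"
proof -
  have "C \<subseteq> {j. s < pos y tm j \<and> pos y tm j < t}" using same_pos[OF assms(1,2)] assms(3,4) by auto
  then have "card C \<le> num tm" unfolding num_in_S_def by (intro card_mono) auto
  then show ?thesis using memK(2)[OF assms(1)] by linarith
qed


lemma D_lt1: "t - s < 1" using s0 t1 by linarith

lemma frac_sm: "frac (s + of_int m) = s"
  using s0 st t1 by simp

lemma live:
  assumes C: "C \<in> K"
  shows "\<exists>\<sigma>\<ge>tm0. pos y \<sigma> (rep C) = s \<and> real (num \<sigma>) < thr"
proof (rule ccontr)
  assume "\<not> ?thesis"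
  then have H: "\<And>\<sigma>. tm0 \<le> \<sigma> \<Longrightarrow> pos y \<sigma> (rep C) = s \<Longrightarrow> thr \<le> real (num \<sigma>)" by force
  define c where "c = rep C"
  define z0 where "z0 = y tm0 c"
  define m where "m = \<lceil>z0 - s\<rceil>"
  define L where "L = s + of_int m - z0"
  have L0: "0 \<le> L" unfolding L_def m_def by linarith
  have L1: "L < 1" unfolding L_def m_def by linarith
  define a where "a = tm0 + L"
  have "\<forall>h\<in>{0..L}. y (tm0 + h) c = z0 + h"
    unfolding z0_def
  proof (rule free[OF tm0 L0], intro ballI impI)
    fix tm assume tm: "tm \<in> {tm0..<tm0 + L}" and e: "y tm c = y tm0 c + (tm - tm0)"
    have "of_int (m - 1) < y tm c - s" "y tm c - s < of_int (m - 1) + 1"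
      using tm e L_def m_def z0_def by (simp_all, linarith+)
    then have "pos y tm c \<noteq> s" unfolding pos_def by (rule frac_ne)
    then show "\<not> held tm c" by (simp add: held_def)
  qed
  then have ya: "y a c = s + of_int m" using L0 unfolding a_def L_def by force
  have a0: "0 \<le> a" "tm0 \<le> a" using tm0 L0 by (auto simp: a_def)
  have stk: "\<forall>tm\<in>{a..a+1}. y tm c = y a c"
  proof (rule stuck[OF a0(1)], simp, intro ballI impI)
    fix tm assume tm: "tm \<in> {a..<a+1}" and e: "y tm c = y a c"
    have "pos y tm c = s" unfolding pos_def e ya by (rule frac_sm)
    then show "held tm c" using H[of tm] tm a0 by (auto simp: held_def c_def)
  qed
  have numge: "\<And>tm. tm \<in> {a..a+1} \<Longrightarrow> thr \<le> real (num tm)"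
  proof -
    fix tm assume tm: "tm \<in> {a..a+1}"
    then have "y tm c = s + of_int m" using stk ya by auto
    then have "pos y tm c = s" unfolding pos_def by (simp only: frac_sm)
    then show "thr \<le> real (num tm)" using H[of tm] tm a0 by (auto simp: c_def)
  qed
  define u where "u = a + 1"
  define D where "D = t - s"
  have D0: "0 < D" "D < 1" using st D_lt1 by (auto simp: D_def)
  have empty: "{j. s < pos y u j \<and> pos y u j < t} = {}"
  proof (rule ccontr)
    assume "{j. s < pos y u j \<and> pos y u j < t} \<noteq> {}"
    then obtain j where j: "s < pos y u j" "pos y u j < t" by auto
    define w where "w = y u j"
    define m' where "m' = \<lfloor>w\<rfloor>"
    have pw: "pos y u j = w - of_int m'" by (simp add: pos_def w_def m'_def frac_def)
    define u' where "u' = u - D"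
    have u': "a \<le> u'" "u' \<le> u" "0 \<le> u'" using D0 a0 by (auto simp: u'_def u_def)
    show False
    proof (cases "y u' j \<le> s + of_int m'")
      case True
      have "s + of_int m' < y u j" using j pw w_def by linarith
      then obtain \<sigma> where \<sigma>: "\<sigma> \<in> {u'..<u}" "y \<sigma> j = s + of_int m'" "\<not> held \<sigma> j"
        using exit[OF u'(3) u'(2) True] by blast
      have "pos y \<sigma> j = s" unfolding pos_def \<sigma>(2) by (rule frac_sm)
      then have "real (num \<sigma>) < thr" using \<sigma>(3) by (auto simp: held_def)
      moreover have "\<sigma> \<in> {a..a+1}" using \<sigma>(1) u' by (auto simp: u_def)
      ultimately show False using numge by fastforce
    next
      case False
      have "\<forall>h\<in>{0..D}. y (u' + h) j = y u' j + h"
      proof (rule free[OF u'(3)], use D0 in simp, intro ballI impI)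
        fix tm assume tm: "tm \<in> {u'..<u' + D}" and e: "y tm j = y u' j + (tm - u')"
        have "y u' j \<le> y tm j" "y tm j \<le> y u j" using mono[of u' tm j] mono[of tm u j] tm u' by (auto simp: u'_def)
        then have "of_int m' < y tm j - s" "y tm j - s < of_int m' + 1"
          using False j pw w_def D_def t1 s0 by linarith+
        then have "pos y tm j \<noteq> s" unfolding pos_def by (rule frac_ne)
        then show "\<not> held tm j" by (simp add: held_def)
      qed
      then have "y (u' + D) j = y u' j + D" using D0 by auto
      then have "y u j = y u' j + D" by (simp add: u'_def)
      then show False using False j pw w_def D_def by linarith
    qed
  qed
  have "num u = 0" unfolding num_in_S_def empty by simp
  moreover have "thr \<le> real (num u)" using numge[of u] by (simp add: u_def)
  ultimately show False using thr0 by simp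
qed


lemma finK: "finite K"
  by (rule finite_subset[OF subset_UNIV]) simp

lemma main: "card K \<le> nat \<lceil>1 / (t - s)\<rceil>"
proof (cases "K = {}")
  case True then show ?thesis by simp
next
  case False
  then obtain A where A: "A \<in> K" by auto
  obtain \<sigma> where \<sigma>: "tm0 \<le> \<sigma>" "pos y \<sigma> (rep A) = s" "real (num \<sigma>) < thr"
    using live[OF A] by blast
  have \<sigma>0: "0 \<le> \<sigma>" using \<sigma>(1) tm0 by linarith
  define cA where "cA = rep A"
  define lA where "lA = y \<sigma> cA"
  have flA: "frac lA = s" using \<sigma>(2) by (simp add: lA_def cA_def pos_def)
  have lAf: "lA = s + of_int \<lfloor>lA\<rfloor>" by (rule frac_eq_s_floor[OF flA])
  define D where "D = t - s"
  have D0: "0 < D" "D < 1" using st D_lt1 by (auto simp: D_def)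
  have motA: "\<forall>h\<in>{0..1}. y (\<sigma> + h) cA = lA + h"
    unfolding lA_def
  proof (rule free[OF \<sigma>0], simp, intro ballI impI)
    fix tm assume tm: "tm \<in> {\<sigma>..<\<sigma> + 1}" and e: "y tm cA = y \<sigma> cA + (tm - \<sigma>)"
    show "\<not> held tm cA"
    proof (cases "tm = \<sigma>")
      case True then show ?thesis using \<sigma>(3) by (simp add: held_def)
    next
      case False
      have "of_int \<lfloor>lA\<rfloor> < y tm cA - s" "y tm cA - s < of_int \<lfloor>lA\<rfloor> + 1"
      proof -
        have "y tm cA = lA + (tm - \<sigma>)" using e by (simp add: lA_def)
        moreover have "\<sigma> < tm" "tm < \<sigma> + 1" using tm False by auto
        ultimately show "of_int \<lfloor>lA\<rfloor> < y tm cA - s" "y tm cA - s < of_int \<lfloor>lA\<rfloor> + 1"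
          using lAf by linarith+
      qed
      then have "pos y tm cA \<noteq> s" unfolding pos_def by (rule frac_ne)
      then show ?thesis by (simp add: held_def)
    qed
  qed
  define E where "E C e \<longleftrightarrow> e \<in> {\<sigma>..<\<sigma>+1} \<and> real (num e) < thr \<and>
      (\<exists>l. frac l = s \<and> (\<forall>h\<in>{0..D}. y (e + h) (rep C) = l + h))" for C e
  have exE: "\<exists>e. E C e" if C: "C \<in> K" for C
  proof (cases "C = A")
    case True
    have "\<forall>h\<in>{0..D}. y (\<sigma> + h) (rep C) = lA + h" using motA D0 True by (auto simp: cA_def)
    then have "E C \<sigma>" using \<sigma>(3) flA \<sigma>0 unfolding E_def by auto
    then show ?thesis by blast
  next
    case False
    define cB where "cB = rep C"
    define g where "g \<tau> = y \<tau> cB - y \<tau> cA" for \<tau>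
    have gc: "continuous_on {\<sigma>..\<sigma>+1} g"
    proof -
      have sub: "{\<sigma>..\<sigma>+1} \<subseteq> {0..}" using \<sigma>0 by auto
      show ?thesis unfolding g_def
        by (rule continuous_on_diff[OF continuous_on_subset[OF cont sub] continuous_on_subset[OF cont sub]])
    qed
    have noint: "g \<tau> \<noteq> of_int j" if "\<tau> \<in> {\<sigma>..\<sigma>+1}" for \<tau> j
    proof
      assume "g \<tau> = of_int j"
      then have "y \<tau> cB = y \<tau> cA + of_int j" by (simp add: g_def)
      then have "pos y \<tau> (rep C) = pos y \<tau> (rep A)" by (simp add: pos_def cB_def cA_def)
      moreover have "tm0 \<le> \<tau>" using that \<sigma>(1) by auto
      ultimately have "C = A" using distinct_pos[OF C A] by blast
      then show False using False by simp
    qed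
    define k where "k = \<lfloor>g \<sigma>\<rfloor>"
    have gs1: "of_int k \<le> g \<sigma>" "g \<sigma> < of_int k + 1" unfolding k_def by linarith+
    have gs2: "g \<sigma> \<noteq> of_int k" using noint[of \<sigma> k] \<sigma>0 by auto
    have g1: "of_int k < g (\<sigma> + 1)"
    proof (rule ccontr)
      assume "\<not> ?thesis"
      then have "g (\<sigma> + 1) \<le> of_int k" by simp
      then obtain \<tau> where "\<sigma> \<le> \<tau>" "\<tau> \<le> \<sigma> + 1" "g \<tau> = of_int k"
        using IVT2'[of g "\<sigma>+1" "of_int k" \<sigma>, OF _ gs1(1) _ gc] by auto
      then show False using noint[of \<tau> k] by auto
    qed
    define lB where "lB = lA + of_int k + 1"
    have flB: "frac lB = s"
    proof -
      have "lB = s + of_int (\<lfloor>lA\<rfloor> + k + 1)" using lAf by (simp add: lB_def)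
      then show ?thesis by (simp only: frac_sm)
    qed
    have yA1: "y (\<sigma> + 1) cA = lA + 1" using motA by auto
    have b1: "y \<sigma> cB \<le> lB" using gs1 by (simp add: g_def lB_def lA_def)
    have b2: "lB < y (\<sigma> + 1) cB" using g1 yA1 by (simp add: g_def lB_def)
    obtain e where e: "e \<in> {\<sigma>..<\<sigma>+1}" "y e cB = lB" "\<not> held e cB"
      using exit[OF \<sigma>0 _ b1 b2] by auto
    have "pos y e cB = s" using flB e(2) by (simp add: pos_def)
    then have ne: "real (num e) < thr" using e(3) by (auto simp: held_def)
    have e0: "0 \<le> e" using e(1) \<sigma>0 by auto
    have motB: "\<forall>h\<in>{0..D}. y (e + h) cB = y e cB + h"
    proof (rule free[OF e0], use D0 in simp, intro ballI impI)
      fix tm assume tm: "tm \<in> {e..<e + D}" and ee: "y tm cB = y e cB + (tm - e)"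
      show "\<not> held tm cB"
      proof (cases "tm = e")
        case True then show ?thesis using e(3) by simp
      next
        case False
        have h: "0 \<le> tm - e" "s + (tm - e) < 1" "s < s + (tm - e)" using tm False t1 by (auto simp: D_def)
        have "pos y tm cB = s + (tm - e)" unfolding pos_def ee e(2) by (rule frac_shift[OF flB h(1,2)])
        then show ?thesis using h(3) by (simp add: held_def)
      qed
    qed
    have "\<forall>h\<in>{0..D}. y (e + h) (rep C) = lB + h" using motB e(2) by (simp add: cB_def)
    then have "E C e" using e(1) ne flB unfolding E_def by blast
    then show ?thesis by blast
  qed
  define ex where "ex C = (SOME e. E C e)" for C
  have Eex: "E C (ex C)" if "C \<in> K" for C
    unfolding ex_def using exE[OF that] by (rule someI_ex)
  have info: "ex C \<in> {\<sigma>..<\<sigma>+1}" "real (num (ex C)) < thr"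
     "\<exists>l. frac l = s \<and> (\<forall>h\<in>{0..D}. y (ex C + h) (rep C) = l + h)" if "C \<in> K" for C
    using Eex[OF that] by (auto simp: E_def)
  have posex: "pos y (ex C + h) (rep C) = s + h" if th: "C \<in> K" "0 \<le> h" "h < D" for C h
  proof -
    obtain l where l: "frac l = s" "\<forall>h\<in>{0..D}. y (ex C + h) (rep C) = l + h" using info(3)[OF th(1)] by blast
    have "y (ex C + h) (rep C) = l + h" using l(2) th by auto
    moreover have "s + h < 1" using th t1 by (simp add: D_def)
    ultimately show ?thesis unfolding pos_def using frac_shift[OF l(1) th(2)] by simp
  qed
  have sep: "ex C + D \<le> ex C'" if "C \<in> K" "C' \<in> K" "ex C < ex C'" for C C'
  proof (rule ccontr)
    assume nt: "\<not> ex C + D \<le> ex C'"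
    define h where "h = ex C' - ex C"
    have h: "0 \<le> h" "h < D" "0 < h" using that nt by (auto simp: h_def)
    have p: "pos y (ex C') (rep C) = s + h" using posex[OF that(1) h(1,2)] by (simp add: h_def)
    have "tm0 \<le> ex C'" using info(1)[OF that(2)] \<sigma>(1) by auto
    then have "thr \<le> real (num (ex C'))"
      using inS[OF that(1), of "ex C'"] p h by (simp add: D_def)
    then show False using info(2)[OF that(2)] by simp
  qed
  have inj: "inj_on ex K"
  proof (rule inj_onI)
    fix C C' assume CC: "C \<in> K" "C' \<in> K" "ex C = ex C'"
    have "pos y (ex C) (rep C) = s" using posex[OF CC(1), of 0] D0 by simp
    moreover have "pos y (ex C) (rep C') = s" using posex[OF CC(2), of 0] D0 CC(3) by simp
    moreover have "tm0 \<le> ex C" using info(1)[OF CC(1)] \<sigma>(1) by auto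
    ultimately show "C = C'" using distinct_pos[OF CC(1,2)] by simp
  qed
  define F where "F = ex ` K"
  have cF: "card F = card K" unfolding F_def by (rule card_image[OF inj])
  have fF: "finite F" unfolding F_def using finK by simp
  have neF: "F \<noteq> {}" unfolding F_def using A by auto
  have loF: "\<forall>x\<in>F. \<sigma> \<le> x" using info(1) by (auto simp: F_def)
  have gF: "\<forall>x\<in>F. \<forall>y\<in>F. x < y \<longrightarrow> x + D \<le> y" using sep by (auto simp: F_def)
  have sp: "\<sigma> + (real (card F) - 1) * D \<le> Max F" by (rule spread[OF fF neF loF gF])
  have "Max F \<in> F" using fF neF by simp
  then have "Max F < \<sigma> + 1" using info(1) by (auto simp: F_def)
  then have "(real (card K) - 1) * D < 1" using sp cF by simp
  then have "real (card K) - 1 < 1 / D" using D0 by (simp add: field_simps)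
  moreover have "1 / D \<le> of_int \<lceil>1 / D\<rceil>" by (rule le_of_int_ceiling)
  ultimately have "int (card K) < \<lceil>1 / D\<rceil> + 1" by linarith
  then show ?thesis by (simp add: D_def)
qed

end

theorem mainTheorem3:
  fixes r s t thr tm0 :: real and y :: "real \<Rightarrow> 'c::finite \<Rightarrow> real"
  assumes "0 \<le> r" "r < s" "s < t" "t \<le> 1" "thr > 0"
    and "blocking_trajectory s t thr y"
    and "tm0 \<ge> 0"
  shows "card {C. critical_cluster thr y tm0 C \<and> persists y tm0 C} \<le> nat \<lceil>1 / (t - s)\<rceil>"
proof -
  interpret blk2 s t thr y tm0
    by unfold_locales (use assms in auto)
  show ?thesis using main by (simp add: K_def)
qed

end
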